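(* Let $\ell>0$. For any constant $C_0>0$ and any $\mu_0\in(0,\ell)$ there is some $\mu\in(0,\mu_0)$ such that, with $$\alpha:=\frac{\sqrt\ell-\sqrt\mu}{\sqrt\ell+\sqrt\mu},\qquad q(z)=\ell(z-\alpha)(z-1),\qquad r(z)=-(1+\alpha)z+\alpha,$$ one has $\sup_{\nu\in[\mu,\ell]}\rho\big(q(z)-\nu\, r(z)\big)<1-C_0\mu$.
   Context: For a polynomial $s(z)$, $\rho(s)$ denotes the maximum modulus of a (complex) root of $s$. *)

theory Defs
  imports "HOL-Analysis.Analysis" "HOL-Computational_Algebra.Polynomial"
begin

text \<open>rho(s): the maximum modulus of a complex root of the polynomial s
  (taken as 0 if s has no roots; only meaningful for nonzero s).\<close>
definition root_radius :: "complex poly \<Rightarrow> real" where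
  "root_radius s = (if {z. poly s z = 0} = {} then 0 else Max (norm ` {z. poly s z = 0}))"

end

theory Submission
  imports Defs
begin

lemma a_nonneg:
  fixes sl sm a :: real
  assumes sm: "0 < sm" "sm < sl" and a: "a * (sl + sm) = sl - sm"
  shows "a \<ge> 0"
proof (rule ccontr)
  assume "\<not> a \<ge> 0"
  hence "a * (sl + sm) < 0" using sm by (simp add: mult_neg_pos)
  thus False using a sm by simp
qed

lemma real_case:
  fixes sl sm a w x :: real
  assumes sm: "0 < sm" "sm < sl" and a: "a * (sl + sm) = sl - sm"
    and w: "0 \<le> w" "w \<le> sl^2 - sm^2"
    and eq: "sl^2 * x^2 - w * (1 + a) * x + w * a = 0"
  shows "\<bar>x\<bar> \<le> (sl - sm) / sl"
proof -
  have a0: "a \<ge> 0" using a_nonneg[OF sm a] .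
  have x0: "x \<ge> 0"
  proof (rule ccontr)
    assume "\<not> x \<ge> 0"
    hence "x < 0" by simp
    have "sl^2 * x^2 > 0" using \<open>x<0\<close> sm by simp
    moreover have "- w * (1 + a) * x \<ge> 0" using \<open>x<0\<close> w a0
      by (simp add: mult_nonneg_nonpos)
    moreover have "w * a \<ge> 0" using w a0 by simp
    ultimately show False using eq by linarith
  qed
  define \<rho> where "\<rho> = (sl - sm) / sl"
  have slp: "sl > 0" using sm by simp
  have hr: "sl * \<rho> = sl - sm" unfolding \<rho>_def using slp by simp
  have r1: "sl^2 * \<rho>^2 = (sl - sm)^2" using hr by (metis power_mult_distrib)
  have a1: "(1 + a) * (sl + sm) = 2 * sl" using a by (simp add: algebra_simps)
  have "((1 + a) * \<rho> - a) * ((sl + sm) * sl) = ((1 + a) * (sl + sm)) * (sl * \<rho>) - (a * (sl + sm)) * sl"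
    by (simp add: algebra_simps)
  also have "\<dots> = (sl - sm) * sl" unfolding a1 hr a
    by (simp add: algebra_simps)
  also have "\<dots> = a * ((sl + sm) * sl)" unfolding a[symmetric] by (simp add: mult.assoc)
  finally have "((1 + a) * \<rho> - a) * ((sl + sm) * sl) = a * ((sl + sm) * sl)" .
  moreover have "(sl + sm) * sl \<noteq> 0" using sm by simp
  ultimately have r2: "(1 + a) * \<rho> - a = a" by simp
  have wa: "w * (1 + a) \<le> 2 * sl * (sl - sm)"
  proof -
    have "w * (1 + a) \<le> (sl^2 - sm^2) * (1 + a)" using w a0 by (simp add: mult_right_mono)
    also have "\<dots> = (sl - sm) * ((1 + a) * (sl + sm))" by (simp add: algebra_simps power2_eq_square)
    also have "\<dots> = 2 * sl * (sl - sm)" unfolding a1 by simp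
    finally show ?thesis .
  qed
  have wa2: "w * a \<le> (sl - sm)^2"
  proof -
    have "w * a \<le> (sl^2 - sm^2) * a" using w a0 by (simp add: mult_right_mono)
    also have "\<dots> = (sl - sm) * (a * (sl + sm))" by (simp add: algebra_simps power2_eq_square)
    also have "\<dots> = (sl - sm)^2" unfolding a by (simp add: power2_eq_square)
    finally show ?thesis .
  qed
  have "x \<le> \<rho>"
  proof (rule ccontr)
    assume "\<not> x \<le> \<rho>"
    hence xr: "x > \<rho>" by simp
    have fr: "sl^2 * \<rho>^2 - w * (1 + a) * \<rho> + w * a \<ge> 0"
    proof -
      have "sl^2 * \<rho>^2 - w * (1 + a) * \<rho> + w * a = (sl - sm)^2 - w * ((1 + a) * \<rho> - a)"
        using r1 by (simp add: algebra_simps)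
      also have "\<dots> = (sl - sm)^2 - w * a" using r2 by simp
      finally show ?thesis using wa2 by linarith
    qed
    have diff: "(sl^2 * x^2 - w * (1 + a) * x + w * a) - (sl^2 * \<rho>^2 - w * (1 + a) * \<rho> + w * a)
        = (x - \<rho>) * (sl^2 * (x + \<rho>) - w * (1 + a))"
      by (simp add: algebra_simps power2_eq_square)
    have e1: "sl^2 * \<rho> = sl * (sl - sm)" using hr by (simp add: power2_eq_square)
    have "sl^2 * x > sl^2 * \<rho>" using xr slp by simp
    hence "sl^2 * (x + \<rho>) > 2 * sl * (sl - sm)"
      using e1 by (simp add: algebra_simps)
    hence "sl^2 * (x + \<rho>) - w * (1 + a) > 0" using wa by linarith
    hence "(x - \<rho>) * (sl^2 * (x + \<rho>) - w * (1 + a)) > 0" using xr by simp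
    thus False using diff fr eq by linarith
  qed
  thus ?thesis using x0 \<rho>_def by simp
qed

lemma root_bound:
  fixes sl sm a w :: real and z :: complex
  assumes sm: "0 < sm" "sm < sl" and a: "a * (sl + sm) = sl - sm"
    and w: "0 \<le> w" "w \<le> sl^2 - sm^2"
    and eq: "of_real (sl^2) * z^2 - of_real (w * (1 + a)) * z + of_real (w * a) = 0"
  shows "norm z \<le> (sl - sm) / sl"
proof -
  obtain x y where z: "z = Complex x y" by (cases z)
  have re: "sl^2 * (x^2 - y^2) - w * (1 + a) * x + w * a = 0"
    using arg_cong[OF eq, of Re] unfolding z by (simp add: power2_eq_square)
  have im: "sl^2 * (2 * x * y) - w * (1 + a) * y = 0"
    using arg_cong[OF eq, of Im] unfolding z by (simp add: power2_eq_square algebra_simps)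
  have a0: "a \<ge> 0" using a_nonneg[OF sm a] .
  have slp: "sl > 0" using sm by simp
  define \<rho> where "\<rho> = (sl - sm) / sl"
  have hr: "sl * \<rho> = sl - sm" unfolding \<rho>_def using slp by simp
  have rho0: "\<rho> \<ge> 0" using sm unfolding \<rho>_def by simp
  show ?thesis
  proof (cases "y = 0")
    case True
    have "\<bar>x\<bar> \<le> (sl - sm) / sl"
      by (rule real_case[OF sm a w]) (use re True in simp)
    moreover have "z = of_real x" using z True by (simp add: complex_eq_iff)
    ultimately show ?thesis by simp
  next
    case False
    have "(sl^2 * (2 * x) - w * (1 + a)) * y = 0" using im by (simp add: algebra_simps)
    hence xx: "sl^2 * (2 * x) = w * (1 + a)" using False by simp
    have m1: "w * (1 + a) * x = sl^2 * (2 * x) * x" by (simp add: xx)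
    have m2: "sl^2 * (2 * x) * x = 2 * (sl^2 * x^2)" by (simp add: power2_eq_square)
    have m3: "sl^2 * (x^2 - y^2) = sl^2 * x^2 - sl^2 * y^2" by (simp add: right_diff_distrib)
    have m4: "sl^2 * (x^2 + y^2) = sl^2 * x^2 + sl^2 * y^2" by (simp add: distrib_left)
    have "sl^2 * (x^2 + y^2) = w * a"
    proof -
      have "sl^2 * x^2 - sl^2 * y^2 - w * (1 + a) * x + w * a = 0" using re m3 by simp
      hence "sl^2 * x^2 - sl^2 * y^2 - 2 * (sl^2 * x^2) + w * a = 0" unfolding m1 m2 .
      thus ?thesis unfolding m4 by simp
    qed
    also have "\<dots> \<le> (sl^2 - sm^2) * a" using w a0 by (simp add: mult_right_mono)
    also have "\<dots> = (sl - sm) * (a * (sl + sm))" by (simp add: algebra_simps power2_eq_square)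
    also have "\<dots> = (sl * \<rho>)^2" unfolding a hr by (simp add: power2_eq_square)
    also have "\<dots> = sl^2 * \<rho>^2" by (simp add: power_mult_distrib)
    finally have h: "x^2 + y^2 \<le> \<rho>^2" using slp by simp
    have "(norm z)^2 = x^2 + y^2" using z by (simp add: cmod_power2)
    hence "(norm z)^2 \<le> \<rho>^2" using h by simp
    thus ?thesis using rho0 power2_le_imp_le unfolding \<rho>_def by blast
  qed
qed


lemma rr_le:
  assumes "p \<noteq> 0" "B \<ge> 0" "\<And>z. poly p z = 0 \<Longrightarrow> norm z \<le> B"
  shows "root_radius p \<le> B"
proof -
  have fin: "finite (norm ` {z. poly p z = 0})" using poly_roots_finite[OF assms(1)] by simp
  show ?thesis unfolding root_radius_def
    using assms fin by (auto simp: Max_le_iff)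
qed

lemma poly_eval:
  fixes l nu al :: real and z :: complex
  shows "poly (smult (complex_of_real l) ([:- complex_of_real al, 1:] * [:-1, 1:])
      - smult (complex_of_real nu) [:complex_of_real al, - complex_of_real (1 + al):]) z
    = of_real l * z^2 - of_real ((l - nu) * (1 + al)) * z + of_real ((l - nu) * al)"
  by (simp add: algebra_simps power2_eq_square)

theorem proposition9:
  fixes l C0 mu0 :: real
  assumes "l > 0" and "C0 > 0" and "0 < mu0" and "mu0 < l"
  shows "\<exists>mu. 0 < mu \<and> mu < mu0 \<and>
    (let alpha = (sqrt l - sqrt mu) / (sqrt l + sqrt mu);
         q = smult (complex_of_real l) ([:- complex_of_real alpha, 1:] * [:-1, 1:]);
         r = [:complex_of_real alpha, - complex_of_real (1 + alpha):]
     in (SUP nu\<in>{mu..l}. root_radius (q - smult (complex_of_real nu) r)) < 1 - C0 * mu)"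
proof -
  define mu where "mu = min (mu0 / 2) (1 / (4 * C0^2 * l))"
  have mu0: "0 < mu" unfolding mu_def using assms by simp
  have mu1: "mu < mu0" unfolding mu_def using assms by simp
  have mu2: "mu \<le> 1 / (4 * C0^2 * l)" unfolding mu_def by simp
  define sl where "sl = sqrt l"
  define sm where "sm = sqrt mu"
  have l_eq: "sl^2 = l" unfolding sl_def using assms by simp
  have mu_eq: "sm^2 = mu" unfolding sm_def using mu0 by simp
  have smp: "0 < sm" unfolding sm_def using mu0 by simp
  have smsl: "sm < sl" unfolding sm_def sl_def using mu1 assms by simp
  have slp: "0 < sl" using smp smsl by simp
  define al where "al = (sl - sm) / (sl + sm)"
  have al: "al * (sl + sm) = sl - sm" unfolding al_def using smp slp by simp
  have bound: "root_radius (smult (complex_of_real l) ([:- complex_of_real al, 1:] * [:-1, 1:])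
      - smult (complex_of_real nu) [:complex_of_real al, - complex_of_real (1 + al):]) \<le> (sl - sm) / sl"
    if nu: "nu \<in> {mu..l}" for nu
  proof (rule rr_le)
    have w: "0 \<le> l - nu" "l - nu \<le> sl^2 - sm^2" using nu l_eq mu_eq by auto
    show "(sl - sm) / sl \<ge> 0" using smsl slp by simp
    fix z assume "poly (smult (complex_of_real l) ([:- complex_of_real al, 1:] * [:-1, 1:])
      - smult (complex_of_real nu) [:complex_of_real al, - complex_of_real (1 + al):]) z = 0"
    hence "of_real (sl^2) * z^2 - of_real ((l - nu) * (1 + al)) * z + of_real ((l - nu) * al) = 0"
      unfolding poly_eval l_eq .
    thus "norm z \<le> (sl - sm) / sl" by (rule root_bound[OF smp smsl al w])
  next
    show "smult (complex_of_real l) ([:- complex_of_real al, 1:] * [:-1, 1:])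
      - smult (complex_of_real nu) [:complex_of_real al, - complex_of_real (1 + al):] \<noteq> 0"
    proof
      assume "smult (complex_of_real l) ([:- complex_of_real al, 1:] * [:-1, 1:])
      - smult (complex_of_real nu) [:complex_of_real al, - complex_of_real (1 + al):] = 0"
      hence "poly (smult (complex_of_real l) ([:- complex_of_real al, 1:] * [:-1, 1:])
      - smult (complex_of_real nu) [:complex_of_real al, - complex_of_real (1 + al):]) 1 = 0" by (metis poly_0)
      hence "of_real l * 1^2 - of_real ((l - nu) * (1 + al)) * 1 + of_real ((l - nu) * al) = (0::complex)"
        unfolding poly_eval .
      moreover have "of_real l * 1^2 - of_real ((l - nu) * (1 + al)) * 1 + of_real ((l - nu) * al)
          = complex_of_real (l - (l - nu) * (1 + al) + (l - nu) * al)" by simp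
      ultimately have "l - (l - nu) * (1 + al) + (l - nu) * al = 0" by (metis of_real_eq_0_iff)
      moreover have "l - (l - nu) * (1 + al) + (l - nu) * al = nu" by (simp add: algebra_simps)
      ultimately show False using nu mu0 by simp
    qed
  qed
  have sup: "(SUP nu\<in>{mu..l}. root_radius (smult (complex_of_real l) ([:- complex_of_real al, 1:] * [:-1, 1:])
      - smult (complex_of_real nu) [:complex_of_real al, - complex_of_real (1 + al):])) \<le> (sl - sm) / sl"
    by (rule cSUP_least) (use mu1 assms bound in auto)
  define t where "t = C0 * sm * sl"
  have t0: "t \<ge> 0" unfolding t_def using assms smp slp by simp
  have "t^2 = C0^2 * mu * l" unfolding t_def using l_eq mu_eq by (simp add: power_mult_distrib)
  also have "\<dots> \<le> C0^2 * (1 / (4 * C0^2 * l)) * l"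
    using mu2 assms by (intro mult_right_mono mult_left_mono) auto
  also have "\<dots> = 1/4" using assms by simp
  finally have "t^2 < 1" by simp
  hence t1: "t < 1" using t0 by (metis abs_of_nonneg abs_square_less_1)
  have "C0 * mu * sl = t * sm" unfolding t_def using mu_eq by (simp add: power2_eq_square)
  also have "\<dots> < sm" using t1 smp by simp
  finally have "C0 * mu < sm / sl" using slp by (simp add: field_simps)
  moreover have "(sl - sm) / sl = 1 - sm / sl" using slp by (simp add: field_simps)
  ultimately have fin: "(sl - sm) / sl < 1 - C0 * mu" by simp
  show ?thesis
    apply (rule exI[of _ mu])
    using mu0 mu1 sup fin unfolding Let_def al_def sl_def sm_def by simp
qed

end
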